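(* For every integer $k\ge 2$: (i) $rc^*(C_{2k}(\{1,k\}))=src^*(C_{2k}(\{1,k\}))=k$; (ii) $rc^*(C_{2k}(\{1,k+1\}))=src^*(C_{2k}(\{1,k+1\}))=k$.
   Context: For $n\ge 2$ and $S\subseteq\{1,\dots,n-1\}$, the circulant digraph $C_n(S)$ has vertex set $\{v_0,\dots,v_{n-1}\}$ and arcs $v_iv_j$ for all $i,j$ with $j-i\equiv s \pmod n$ for some $s\in S$. For a strongly connected digraph $D$ and an arc-colouring $\Gamma:A(D)\to\{1,\dots,k\}$, a directed path is rainbow if its arcs have pairwise distinct colours. $\Gamma$ is rainbow connected if for every ordered pair of distinct vertices $x,y$ there is a rainbow directed $xy$-path; $rc^*(D)$ is the minimum number of colours of such a colouring. $\Gamma$ is strongly rainbow connected if for every ordered pair of distinct vertices $x,y$ there is a rainbow directed $xy$-path of length $d_D(x,y)$; $src^*(D)$ is the minimum such number. *)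

theory Defs
  imports Main
begin

definition circulant_arcs :: "nat \<Rightarrow> nat set \<Rightarrow> (nat \<times> nat) set" where
  "circulant_arcs n S = {(i, j). i < n \<and> j < n \<and> (\<exists>s\<in>S. (int j - int i) mod int n = int s mod int n)}"

definition is_dpath :: "('v \<times> 'v) set \<Rightarrow> 'v list \<Rightarrow> 'v \<Rightarrow> 'v \<Rightarrow> bool" where
  "is_dpath A p x y \<longleftrightarrow> p \<noteq> [] \<and> hd p = x \<and> last p = y \<and> distinct p \<and>
     (\<forall>i < length p - 1. (p ! i, p ! Suc i) \<in> A)"

definition path_arcs :: "'v list \<Rightarrow> ('v \<times> 'v) list" where
  "path_arcs p = zip p (tl p)"

definition dpath_len :: "'v list \<Rightarrow> nat" where
  "dpath_len p = length p - 1"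

definition ddist :: "('v \<times> 'v) set \<Rightarrow> 'v \<Rightarrow> 'v \<Rightarrow> nat" where
  "ddist A x y = (LEAST l. \<exists>p. is_dpath A p x y \<and> dpath_len p = l)"

definition rainbow :: "('v \<times> 'v \<Rightarrow> nat) \<Rightarrow> 'v list \<Rightarrow> bool" where
  "rainbow c p \<longleftrightarrow> distinct (map c (path_arcs p))"

definition arc_colouring :: "('v \<times> 'v) set \<Rightarrow> nat \<Rightarrow> ('v \<times> 'v \<Rightarrow> nat) \<Rightarrow> bool" where
  "arc_colouring A k c \<longleftrightarrow> (\<forall>a\<in>A. c a \<in> {1..k})"

definition rainbow_connected :: "'v set \<Rightarrow> ('v \<times> 'v) set \<Rightarrow> ('v \<times> 'v \<Rightarrow> nat) \<Rightarrow> bool" where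
  "rainbow_connected V A c \<longleftrightarrow>
     (\<forall>x\<in>V. \<forall>y\<in>V. x \<noteq> y \<longrightarrow> (\<exists>p. is_dpath A p x y \<and> rainbow c p))"

definition strongly_rainbow_connected :: "'v set \<Rightarrow> ('v \<times> 'v) set \<Rightarrow> ('v \<times> 'v \<Rightarrow> nat) \<Rightarrow> bool" where
  "strongly_rainbow_connected V A c \<longleftrightarrow>
     (\<forall>x\<in>V. \<forall>y\<in>V. x \<noteq> y \<longrightarrow>
        (\<exists>p. is_dpath A p x y \<and> dpath_len p = ddist A x y \<and> rainbow c p))"

definition rc :: "'v set \<Rightarrow> ('v \<times> 'v) set \<Rightarrow> nat" where
  "rc V A = (LEAST k. \<exists>c. arc_colouring A k c \<and> rainbow_connected V A c)"

definition src :: "'v set \<Rightarrow> ('v \<times> 'v) set \<Rightarrow> nat" where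
  "src V A = (LEAST k. \<exists>c. arc_colouring A k c \<and> strongly_rainbow_connected V A c)"

end

theory Submission
  imports Defs
begin

lemma pot_path:
  fixes F :: "'v \<Rightarrow> nat"
  assumes arc: "\<And>u v. (u,v) \<in> A \<Longrightarrow> F v \<le> F u + 1"
  shows "p \<noteq> [] \<Longrightarrow> (\<forall>i<length p - 1. (p!i, p!Suc i) \<in> A) \<Longrightarrow> F (last p) \<le> F (hd p) + (length p - 1)"
proof (induction p)
  case Nil then show ?case by simp
next
  case (Cons a q)
  show ?case
  proof (cases "q = []")
    case True then show ?thesis by simp
  next
    case False
    have q: "\<forall>i<length q - 1. (q!i, q!Suc i) \<in> A"
    proof (intro allI impI)
      fix i assume "i < length q - 1"
      then have "Suc i < length (a#q) - 1" by simp
      then have "((a#q)!Suc i, (a#q)!Suc (Suc i)) \<in> A" using Cons.prems(2) by blast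
      then show "(q!i, q!Suc i) \<in> A" by simp
    qed
    have IH: "F (last q) \<le> F (hd q) + (length q - 1)" using Cons.IH[OF False q] .
    have "0 < length (a#q) - 1" using False by simp
    then have "((a#q)!0, (a#q)!Suc 0) \<in> A" using Cons.prems(2) by blast
    then have "(a, hd q) \<in> A" using False by (simp add: hd_conv_nth)
    then have "F (hd q) \<le> F a + 1" by (rule arc)
    then show ?thesis using IH False by (cases q) auto
  qed
qed

lemma map_fst_zip_tl: "map (\<lambda>a. f (fst a)) (zip p (tl p)) = map f (butlast p)"
  by (induction p rule: induct_list012) auto

lemma arcD:
  assumes "(u,v) \<in> circulant_arcs n S"
  shows "u < n \<and> v < n \<and> (\<exists>s\<in>S. v = (u+s) mod n)"
proof -
  from assms obtain s where s: "s \<in> S" "u < n" "v < n" "(int v - int u) mod int n = int s mod int n"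
    unfolding circulant_arcs_def by auto
  have "int v mod int n = (int u + int s) mod int n"
    using s(4) by (metis add.commute diff_add_cancel mod_add_left_eq)
  then have "int v = int ((u + s) mod n)" using s(3) by (simp add: zmod_int)
  then show ?thesis using s by auto
qed

lemma off_step:
  assumes "x < (n::nat)"
  shows "((u+s) mod n + n - x) mod n = ((u + n - x) mod n + s) mod n"
proof -
  have "int (((u+s) mod n + n - x) mod n) = (int ((u+s) mod n) + int n - int x) mod int n"
    using assms by (simp add: zmod_int of_nat_diff)
  also have "\<dots> = (int u + int s + int n - int x) mod int n"
    by (simp add: zmod_int) (metis mod_add_left_eq mod_diff_left_eq)
  also have "\<dots> = (int ((u + n - x) mod n) + int s) mod int n"
    using assms by (simp add: zmod_int of_nat_diff mod_simps algebra_simps)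
  also have "\<dots> = int (((u + n - x) mod n + s) mod n)" by (simp add: zmod_int)
  finally show ?thesis by simp
qed

lemma mod_add_cancel_l: "((x::nat) + a) mod m = (x + b) mod m \<Longrightarrow> a mod m = b mod m"
  by (simp add: nat_mod_eq_iff)

lemma generic:
  fixes n k tz :: nat and S :: "nat set" and D :: "nat \<Rightarrow> nat"
  assumes n: "n = 2*k" "k \<ge> 1"
  and D0: "D 0 = 0"
  and Dstep: "\<And>a s. a < n \<Longrightarrow> s \<in> S \<Longrightarrow> D ((a+s) mod n) \<le> D a + 1"
  and paths: "\<And>t. 0<t \<Longrightarrow> t<n \<Longrightarrow> \<exists>g L. g 0 = 0 \<and> g L = t \<and> L = D t \<and>
      (\<forall>i j. i<j \<longrightarrow> j \<le> L \<longrightarrow> g i < g j) \<and> (\<forall>j<L. g (Suc j) - g j \<in> S) \<and> (\<forall>j<L. g j mod k = j)"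
  and tz: "tz < n" "D tz = k"
  shows "rc {0..<n} (circulant_arcs n S) = k \<and> src {0..<n} (circulant_arcs n S) = k"
proof -
  define A where "A = circulant_arcs n S"
  have potx: "D ((y+n-x) mod n) \<le> dpath_len p" if x: "x<n" and p: "is_dpath A p x y" for x y p
  proof -
    let ?F = "\<lambda>v. D ((v+n-x) mod n)"
    have arc: "?F v \<le> ?F u + 1" if "(u,v) \<in> A" for u v
    proof -
      from arcD[OF that[unfolded A_def]] obtain s where s: "s \<in> S" "v = (u+s) mod n" by auto
      have "?F v = D (((u + n - x) mod n + s) mod n)" using s(2) off_step[OF x] by simp
      also have "\<dots> \<le> ?F u + 1" using Dstep[OF _ s(1)] n by simp
      finally show ?thesis .
    qed
    have "?F (last p) \<le> ?F (hd p) + (length p - 1)"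
      using pot_path[of A ?F, OF arc] p unfolding is_dpath_def by blast
    then show ?thesis using p D0 unfolding is_dpath_def dpath_len_def by simp
  qed
  have low: "k \<le> m" if lm: "arc_colouring A m c" "rainbow_connected {0..<n} A c" for m c
  proof -
    have "tz \<noteq> 0"
    proof
      assume "tz = 0" then show False using tz D0 n by simp
    qed
    obtain p where p: "is_dpath A p 0 tz" "rainbow c p"
    proof -
      have "0 \<in> {0..<n}" "tz \<in> {0..<n}" using tz n by auto
      then show ?thesis using lm(2) \<open>tz \<noteq> 0\<close> that unfolding rainbow_connected_def by metis
    qed
    have "k \<le> dpath_len p" using potx[OF _ p(1)] tz n by simp
    also have "dpath_len p = length (path_arcs p)" by (simp add: dpath_len_def path_arcs_def)
    also have "\<dots> = card (set (map c (path_arcs p)))"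
      using distinct_card[of "map c (path_arcs p)"] p(2) unfolding rainbow_def by simp
    also have "\<dots> \<le> card {1..m}"
    proof (rule card_mono)
      show "set (map c (path_arcs p)) \<subseteq> {1..m}"
      proof
        fix z assume "z \<in> set (map c (path_arcs p))"
        then obtain a where a: "a \<in> set (zip p (tl p))" "z = c a" by (auto simp: path_arcs_def)
        then obtain i where i: "i < length (zip p (tl p))" "a = zip p (tl p) ! i"
          by (metis in_set_conv_nth)
        have "a = (p!i, p!Suc i)" using i by (simp add: nth_tl)
        moreover have "i < length p - 1" using i by simp
        ultimately have "a \<in> A" using p(1) unfolding is_dpath_def by blast
        then show "z \<in> {1..m}" using lm(1) a unfolding arc_colouring_def by blast
      qed
    qed simp
    finally show ?thesis by simp
  qed
  define c0 where "c0 = (\<lambda>a::nat\<times>nat. fst a mod k + 1)"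
  have col: "arc_colouring A k c0" using n unfolding arc_colouring_def c0_def
    by (auto simp: Suc_le_eq)
  have src_conn: "strongly_rainbow_connected {0..<n} A c0"
    unfolding strongly_rainbow_connected_def
  proof (intro ballI impI)
    fix x y assume xy: "x \<in> {0..<n}" "y \<in> {0..<n}" "x \<noteq> y"
    define t where "t = (y+n-x) mod n"
    have t_eq: "t = (if x \<le> y then y - x else y + n - x)"
    proof (cases "x \<le> y")
      case True
      have e: "y+n-x = (y-x) + n" using xy True by simp
      have "y - x < n" using xy by auto
      then have "(y+n-x) mod n = y - x" using e by (metis mod_add_self2 mod_less)
      then show ?thesis unfolding t_def using True by simp
    next
      case False
      then have "y+n-x < n" using xy by simp
      then show ?thesis unfolding t_def using False by simp
    qed
    have t: "0 < t" "t < n" using xy t_eq by auto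
    obtain g L where g: "g 0 = 0" "g L = t" "L = D t"
      "\<forall>i j. i<j \<longrightarrow> j \<le> L \<longrightarrow> g i < g j" "\<forall>j<L. g (Suc j) - g j \<in> S" "\<forall>j<L. g j mod k = j"
      using paths[OF t] by blast
    have gle: "g j \<le> t" if "j \<le> L" for j
      using g(2,4) that by (cases "j = L") (auto simp: less_imp_le)
    define p where "p = map (\<lambda>j. (x + g j) mod n) [0..<Suc L]"
    have xn: "x < n" "y < n" using xy by auto
    have dp: "is_dpath A p x y"
      unfolding is_dpath_def
    proof (intro conjI allI impI)
      show "p \<noteq> []" by (simp add: p_def)
      show "hd p = x" using g(1) xn by (simp add: p_def hd_map del: upt_Suc)
      have "last p = (x + t) mod n" using g(2) unfolding p_def by (simp add: last_map del: upt_Suc)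
      also have "\<dots> = y"
      proof (cases "x \<le> y")
        case True then show ?thesis using t_eq xn by simp
      next
        case False
        then have "x + t = y + n" using t_eq xn by simp
        then show ?thesis using xn by simp
      qed
      finally show "last p = y" .
      show "distinct p" unfolding p_def distinct_map
      proof
        show "inj_on (\<lambda>j. (x + g j) mod n) (set [0..<Suc L])"
        proof (rule inj_onI)
          fix i j assume ij: "i \<in> set [0..<Suc L]" "j \<in> set [0..<Suc L]" "(x + g i) mod n = (x + g j) mod n"
          have "g i mod n = g j mod n" using ij(3) by (rule mod_add_cancel_l)
          moreover have "g i < n" "g j < n" using gle[of i] gle[of j] ij t by auto
          ultimately have "g i = g j" by simp
          then show "i = j" using g(4) ij by (metis atLeastLessThan_iff less_Suc_eq_le linorder_neqE_nat less_irrefl set_upt)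
        qed
      qed simp
      fix i assume i: "i < length p - 1"
      then have iL: "i < L" by (simp add: p_def)
      have pi: "p!i = (x + g i) mod n" "p!Suc i = (x + g (Suc i)) mod n" using iL
        by (simp_all add: p_def nth_map del: upt_Suc)
      have lt: "g i < g (Suc i)" using g(4) iL by auto
      have "(int ((x + g (Suc i)) mod n) - int ((x + g i) mod n)) mod int n
           = (int (x + g (Suc i)) - int (x + g i)) mod int n"
        by (simp add: zmod_int mod_diff_eq)
      also have "\<dots> = int (g (Suc i) - g i) mod int n" using lt by (simp add: of_nat_diff)
      finally show "(p!i, p!Suc i) \<in> A" unfolding A_def circulant_arcs_def pi
        using g(5) iL n by auto
    qed
    have len: "dpath_len p = D t" using g(3) by (simp add: dpath_len_def p_def)
    have dd: "ddist A x y = D t"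
      unfolding ddist_def
    proof (rule Least_equality)
      show "\<exists>p. is_dpath A p x y \<and> dpath_len p = D t" using dp len by blast
      fix l assume "\<exists>p. is_dpath A p x y \<and> dpath_len p = l"
      then show "D t \<le> l" using potx xn t_def by blast
    qed
    have rb: "rainbow c0 p"
    proof -
      have "map c0 (path_arcs p) = map (\<lambda>v. v mod k + 1) (butlast p)"
        unfolding c0_def path_arcs_def by (rule map_fst_zip_tl)
      also have "butlast p = map (\<lambda>j. (x + g j) mod n) [0..<L]"
        by (simp add: p_def map_butlast[symmetric])
      finally have e: "map c0 (path_arcs p) = map (\<lambda>j. (x + g j) mod n mod k + 1) [0..<L]" by simp
      have "inj_on (\<lambda>j. (x + g j) mod n mod k + 1) {0..<L}"
      proof (rule inj_onI)
        fix i j assume ij: "i \<in> {0..<L}" "j \<in> {0..<L}" "(x + g i) mod n mod k + 1 = (x + g j) mod n mod k + 1"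
        have "(x + g i) mod k = (x + g j) mod k" using ij(3) n by (simp add: mod_mod_cancel)
        then have "g i mod k = g j mod k" by (rule mod_add_cancel_l)
        then show "i = j" using g(6) ij by auto
      qed
      then show ?thesis unfolding rainbow_def e by (simp add: distinct_map)
    qed
    show "\<exists>p. is_dpath A p x y \<and> dpath_len p = ddist A x y \<and> rainbow c0 p"
      using dp len dd rb by auto
  qed
  have rc_conn: "rainbow_connected {0..<n} A c0"
    using src_conn unfolding strongly_rainbow_connected_def rainbow_connected_def by blast
  have "rc {0..<n} A = k" unfolding rc_def
    by (rule Least_equality) (use col rc_conn low in auto)
  moreover have "src {0..<n} A = k" unfolding src_def
  proof (rule Least_equality)
    show "\<exists>c. arc_colouring A k c \<and> strongly_rainbow_connected {0..<n} A c" using col src_conn by blast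
    fix m assume "\<exists>c. arc_colouring A m c \<and> strongly_rainbow_connected {0..<n} A c"
    then obtain c where "arc_colouring A m c" "strongly_rainbow_connected {0..<n} A c" by blast
    moreover then have "rainbow_connected {0..<n} A c"
      unfolding strongly_rainbow_connected_def rainbow_connected_def by blast
    ultimately show "k \<le> m" using low by blast
  qed
  ultimately show ?thesis unfolding A_def by simp
qed


lemma graph1:
  fixes k :: nat assumes k: "k \<ge> 2"
  shows "rc {0..<2*k} (circulant_arcs (2*k) {1, k}) = k \<and> src {0..<2*k} (circulant_arcs (2*k) {1, k}) = k"
proof (rule generic[where D = "\<lambda>a. if a < k then a else a - k + 1" and tz = "2*k-1"])
  fix a s assume a: "a < 2*k" and s: "s \<in> {1, k}"
  show "(if (a+s) mod (2*k) < k then (a+s) mod (2*k) else (a+s) mod (2*k) - k + 1)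
        \<le> (if a < k then a else a - k + 1) + 1"
  proof (cases "s = 1")
    case True
    show ?thesis
    proof (cases "a + 1 < 2*k")
      case c: True
      then have "(a+s) mod (2*k) = a+1" using True by simp
      then show ?thesis by auto
    next
      case False
      then have "a + 1 = 2*k" using a by simp
      then have "(a+s) mod (2*k) = 0" using True by simp
      then show ?thesis using k by simp
    qed
  next
    case False
    then have sk: "s = k" using s by simp
    show ?thesis
    proof (cases "a < k")
      case True
      then have "(a+s) mod (2*k) = a+k" using sk by simp
      then show ?thesis using True by auto
    next
      case False
      then have "a + s = (a - k) + 2*k" using sk by simp
      then have "(a+s) mod (2*k) = a - k" using a by (metis mod_add_self2 mod_less less_imp_diff_less le_less_trans
          diff_less_mono not_less order_refl)
      then show ?thesis using False a by auto
    qed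
  qed
next
  fix t assume t: "0 < t" "t < 2*k"
  show "\<exists>g L. g 0 = 0 \<and> g L = t \<and> L = (if t < k then t else t - k + 1) \<and>
      (\<forall>i j. i<j \<longrightarrow> j \<le> L \<longrightarrow> g i < g j) \<and> (\<forall>j<L. g (Suc j) - g j \<in> {1,k}) \<and> (\<forall>j<L. g j mod k = j)"
  proof (cases "t < k")
    case True
    show ?thesis by (rule exI[of _ id], rule exI[of _ t]) (use True in auto)
  next
    case False
    define b where "b = t - k"
    have b: "b < k" "t = b + k" using False t unfolding b_def by auto
    show ?thesis
      by (rule exI[of _ "\<lambda>j. if j \<le> b then j else t"], rule exI[of _ "Suc b"]) (use b k False in auto)
  qed
qed (use k in auto)

lemma graph2:
  fixes k :: nat assumes k: "k \<ge> 2"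
  shows "rc {0..<2*k} (circulant_arcs (2*k) {1, k+1}) = k \<and> src {0..<2*k} (circulant_arcs (2*k) {1, k+1}) = k"
proof (rule generic[where D = "\<lambda>a. if a \<le> k then a else a - k" and tz = "k"])
  fix a s assume a: "a < 2*k" and s: "s \<in> {1, k+1}"
  show "(if (a+s) mod (2*k) \<le> k then (a+s) mod (2*k) else (a+s) mod (2*k) - k)
        \<le> (if a \<le> k then a else a - k) + 1"
  proof (cases "s = 1")
    case True
    show ?thesis
    proof (cases "a + 1 < 2*k")
      case c: True
      then have "(a+s) mod (2*k) = a+1" using True by simp
      then show ?thesis by auto
    next
      case False
      then have "a + 1 = 2*k" using a by simp
      then have "(a+s) mod (2*k) = 0" using True by simp
      then show ?thesis using k by simp
    qed
  next
    case False
    then have sk: "s = k+1" using s by simp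
    show ?thesis
    proof (cases "a + k + 1 < 2*k")
      case True
      then have "(a+s) mod (2*k) = a+k+1" using sk by simp
      then show ?thesis using True by auto
    next
      case False
      then have e: "a + s = (a + 1 - k) + 2*k" using sk by simp
      have "a + 1 - k < 2*k" using a by simp
      then have "(a+s) mod (2*k) = a + 1 - k" using e by (metis mod_add_self2 mod_less)
      then show ?thesis using False a by auto
    qed
  qed
next
  fix t assume t: "0 < t" "t < 2*k"
  show "\<exists>g L. g 0 = 0 \<and> g L = t \<and> L = (if t \<le> k then t else t - k) \<and>
      (\<forall>i j. i<j \<longrightarrow> j \<le> L \<longrightarrow> g i < g j) \<and> (\<forall>j<L. g (Suc j) - g j \<in> {1,k+1}) \<and> (\<forall>j<L. g j mod k = j)"
  proof (cases "t \<le> k")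
    case True
    show ?thesis by (rule exI[of _ id], rule exI[of _ t]) (use True in auto)
  next
    case False
    have L: "t - k < k" "0 < t - k" using False t by auto
    have md: "(k + j) mod k = j" if "j < k" for j using that by simp
    show ?thesis
      apply (rule exI[of _ "\<lambda>j. if j = 0 then 0 else k + j"], rule exI[of _ "t - k"])
      using L False md by auto
  qed
qed (use k in auto)

theorem theorem9:
  fixes k :: nat
  assumes "k \<ge> 2"
  shows "rc {0..<2*k} (circulant_arcs (2*k) {1, k}) = k \<and>
         src {0..<2*k} (circulant_arcs (2*k) {1, k}) = k \<and>
         rc {0..<2*k} (circulant_arcs (2*k) {1, k+1}) = k \<and>
         src {0..<2*k} (circulant_arcs (2*k) {1, k+1}) = k"
  using graph1[OF assms] graph2[OF assms] by blast

end
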